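(* Let $D$ be a planar distributive lattice with a fixed planar diagram having two distinct join-reducible coatoms $c_\ell$ and $c_r$, $c_\ell$ to the left of $c_r$, and let $e=c_\ell\wedge c_r$. Then: (i) $J(D)\setminus{\downarrow}e=\{\mathrm{ljsp}(c_\ell),\mathrm{rjsp}(c_r)\}$ and $\mathrm{ljsp}(c_\ell)\ne\mathrm{rjsp}(c_r)$; (ii) $\{\mathrm{ljsp}(c_\ell),\mathrm{rjsp}(c_r)\}$ is the set of maximal elements of $J(D)$, and $\mathrm{ljsp}(c_\ell)$ and $\mathrm{rjsp}(c_r)$ are incomparable; (iii) $\mathrm{ljsp}(c_\ell)\not\le e\vee\mathrm{rjsp}(c_r)$ and $\mathrm{rjsp}(c_r)\not\le e\vee\mathrm{ljsp}(c_\ell)$; (iv) $e\not\le\mathrm{ljsp}(c_\ell)$ and $e\not\le\mathrm{rjsp}(c_r)$.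
   Context: A planar lattice is a finite lattice with a fixed Hasse diagram drawn in the plane without crossing edges; $\mathrm{LBound}(D)$ and $\mathrm{RBound}(D)$ denote its left and right boundary chains. $J(D)$ is the set of nonzero join-irreducible elements, $J_0(D)=J(D)\cup\{0\}$, ${\downarrow}x=\{y:y\le x\}$. For $x\in D$, $\mathrm{ljsp}(x)$ is the largest element of $\mathrm{LBound}(D)\cap J_0(D)\cap{\downarrow}x$ and $\mathrm{rjsp}(x)$ is the largest element of $\mathrm{RBound}(D)\cap J_0(D)\cap{\downarrow}x$. *)

theory Defs
  imports "HOL-Analysis.Analysis"
begin

definition covers :: "'a::order \<Rightarrow> 'a \<Rightarrow> bool" where
  "covers a b \<longleftrightarrow> a < b \<and> \<not> (\<exists>z. a < z \<and> z < b)"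

definition coatom :: "'a::bounded_lattice \<Rightarrow> bool" where
  "coatom c \<longleftrightarrow> covers c top"

definition Jirr :: "'a::bounded_lattice set" where
  "Jirr = {x. x \<noteq> bot \<and> (\<forall>y z. x = sup y z \<longrightarrow> x = y \<or> x = z)}"

definition Jirr0 :: "'a::bounded_lattice set" where
  "Jirr0 = Jirr \<union> {bot}"

text \<open>A planar (Hasse) diagram: injective placement, every covering edge goes strictly
upwards, edges are straight segments, two distinct edges meet at most in common endpoints
(this also forbids a vertex lying in the interior of an edge).\<close>
definition planar_diagram :: "('a::bounded_lattice \<Rightarrow> real \<times> real) \<Rightarrow> bool" where
  "planar_diagram pos \<longleftrightarrow>
     inj pos \<and>
     (\<forall>a b. covers a b \<longrightarrow> snd (pos a) < snd (pos b)) \<and>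
     (\<forall>a b c d. covers a b \<and> covers c d \<and> (a, b) \<noteq> (c, d) \<longrightarrow>
        closed_segment (pos a) (pos b) \<inter> closed_segment (pos c) (pos d)
          \<subseteq> {pos a, pos b} \<inter> {pos c, pos d})"

definition LBound :: "('a::bounded_lattice \<Rightarrow> real \<times> real) \<Rightarrow> 'a set" where
  "LBound pos = {x. \<forall>a b. covers a b \<longrightarrow>
      (\<forall>t::real. t > 0 \<longrightarrow> (fst (pos x) - t, snd (pos x)) \<notin> closed_segment (pos a) (pos b))}"

definition RBound :: "('a::bounded_lattice \<Rightarrow> real \<times> real) \<Rightarrow> 'a set" where
  "RBound pos = {x. \<forall>a b. covers a b \<longrightarrow>
      (\<forall>t::real. t > 0 \<longrightarrow> (fst (pos x) + t, snd (pos x)) \<notin> closed_segment (pos a) (pos b))}"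

definition ljsp :: "('a::bounded_lattice \<Rightarrow> real \<times> real) \<Rightarrow> 'a \<Rightarrow> 'a" where
  "ljsp pos x = (GREATEST y. y \<in> LBound pos \<inter> Jirr0 \<inter> {z. z \<le> x})"

definition rjsp :: "('a::bounded_lattice \<Rightarrow> real \<times> real) \<Rightarrow> 'a \<Rightarrow> 'a" where
  "rjsp pos x = (GREATEST y. y \<in> RBound pos \<inter> Jirr0 \<inter> {z. z \<le> x})"

definition is_chain :: "'a::order set \<Rightarrow> bool" where
  "is_chain C \<longleftrightarrow> (\<forall>a\<in>C. \<forall>b\<in>C. a \<le> b \<or> b \<le> a)"

definition max_chain :: "'a::order set \<Rightarrow> bool" where
  "max_chain C \<longleftrightarrow> is_chain C \<and> (\<forall>D. is_chain D \<and> C \<subseteq> D \<longrightarrow> D = C)"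

definition chain_path :: "('a::order \<Rightarrow> real \<times> real) \<Rightarrow> 'a set \<Rightarrow> (real \<times> real) set" where
  "chain_path pos C = (\<Union>{closed_segment (pos a) (pos b) | a b. a \<in> C \<and> b \<in> C \<and> covers a b})"

definition left_of :: "('a::order \<Rightarrow> real \<times> real) \<Rightarrow> 'a \<Rightarrow> 'a \<Rightarrow> bool" where
  "left_of pos x y \<longleftrightarrow> \<not> x \<le> y \<and> \<not> y \<le> x \<and>
     (\<exists>C. max_chain C \<and> y \<in> C \<and>
        (\<exists>p \<in> chain_path pos C. snd p = snd (pos x) \<and> fst (pos x) < fst p))"

end

theory Submission
  imports Defs
begin



lemma cover_exists:
  fixes x y :: "'a::{finite,order}"
  assumes "x < y" shows "\<exists>z. covers x z \<and> z \<le> y"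
proof -
  have "finite {z. x < z \<and> z \<le> y}" "{z. x < z \<and> z \<le> y} \<noteq> {}" using assms by auto
  from finite_has_minimal[OF this] obtain m where m: "m \<in> {z. x < z \<and> z \<le> y}"
    "\<forall>b\<in>{z. x < z \<and> z \<le> y}. b \<le> m \<longrightarrow> m = b" by blast
  have "covers x m" unfolding covers_def
  proof (intro conjI notI)
    show "x < m" using m by auto
    assume "\<exists>z. x < z \<and> z < m"
    then obtain z where "x < z" "z < m" by auto
    hence "z \<in> {z. x < z \<and> z \<le> y}" using m by auto
    then show False using m(2) \<open>z < m\<close> by auto
  qed
  then show ?thesis using m by auto
qed

lemma cover_exists_below:
  fixes x y :: "'a::{finite,order}"
  assumes "x < y" shows "\<exists>z. covers z y \<and> x \<le> z"
proof -
  have "finite {z. x \<le> z \<and> z < y}" "{z. x \<le> z \<and> z < y} \<noteq> {}" using assms by auto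
  from finite_has_maximal[OF this] obtain m where m: "m \<in> {z. x \<le> z \<and> z < y}"
    "\<forall>b\<in>{z. x \<le> z \<and> z < y}. m \<le> b \<longrightarrow> m = b" by blast
  have "covers m y" unfolding covers_def
  proof (intro conjI notI)
    show "m < y" using m by auto
    assume "\<exists>z. m < z \<and> z < y"
    then obtain z where "m < z" "z < y" by auto
    hence "z \<in> {z. x \<le> z \<and> z < y}" using m by auto
    then show False using m(2) \<open>m < z\<close> by auto
  qed
  then show ?thesis using m by auto
qed

lemma hgt_mono:
  fixes pos :: "'a::{finite,order} \<Rightarrow> real \<times> real"
  assumes up: "\<And>a b. covers a b \<Longrightarrow> snd (pos a) < snd (pos b)"
  shows "x < y \<Longrightarrow> snd (pos x) < snd (pos y)"
proof (induction y arbitrary: x rule: measure_induct_rule[of "\<lambda>y. card {z. z < y}"])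
  case (less y)
  obtain w where w: "covers w y" "x \<le> w" using cover_exists_below[OF less.prems] by blast
  show ?case
  proof (cases "x = w")
    case True then show ?thesis using up w by auto
  next
    case False
    hence "x < w" using w by auto
    have "w < y" using w unfolding covers_def by auto
    have "{z. z < w} \<subset> {z. z < y}" using \<open>w < y\<close> by auto
    hence "card {z. z < w} < card {z. z < y}" by (simp add: psubset_card_mono)
    with less.IH \<open>x < w\<close> have "snd (pos x) < snd (pos w)" by blast
    then show ?thesis using up w by force
  qed
qed

lemma max_in_finite_chain:
  fixes S :: "'a::{finite,order} set"
  assumes "is_chain S" "S \<noteq> {}"
  shows "\<exists>m\<in>S. \<forall>x\<in>S. x \<le> m"
proof -
  from finite_has_maximal[OF _ assms(2)] obtain m where "m \<in> S" "\<forall>b\<in>S. m \<le> b \<longrightarrow> m = b" by auto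
  moreover have "\<forall>x\<in>S. x \<le> m"
  proof
    fix x assume "x \<in> S"
    then have "x \<le> m \<or> m \<le> x" using assms(1) \<open>m \<in> S\<close> unfolding is_chain_def by blast
    then show "x \<le> m" using \<open>x \<in> S\<close> calculation by auto
  qed
  ultimately show ?thesis by blast
qed

lemma min_in_finite_chain:
  fixes S :: "'a::{finite,order} set"
  assumes "is_chain S" "S \<noteq> {}"
  shows "\<exists>m\<in>S. \<forall>x\<in>S. m \<le> x"
proof -
  from finite_has_minimal[OF _ assms(2)] obtain m where "m \<in> S" "\<forall>b\<in>S. b \<le> m \<longrightarrow> m = b" by auto
  moreover have "\<forall>x\<in>S. m \<le> x"
  proof
    fix x assume "x \<in> S"
    then have "x \<le> m \<or> m \<le> x" using assms(1) \<open>m \<in> S\<close> unfolding is_chain_def by blast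
    then show "m \<le> x" using \<open>x \<in> S\<close> calculation by auto
  qed
  ultimately show ?thesis by blast
qed

lemma chain_subset: "is_chain C \<Longrightarrow> S \<subseteq> C \<Longrightarrow> is_chain S"
  unfolding is_chain_def by blast

lemma extend_chain:
  fixes S :: "'a::{finite,order} set"
  assumes "is_chain S" shows "\<exists>C. max_chain C \<and> S \<subseteq> C"
proof -
  let ?A = "{C. is_chain C \<and> S \<subseteq> C}"
  have fin: "finite ?A" by (rule finite)
  have ne: "?A \<noteq> {}" using assms by blast
  obtain m where "m \<in> ?A" "\<forall>b\<in>?A. m \<le> b \<longrightarrow> m = b"
    using finite_has_maximal[OF fin ne] by (elim bexE) simp
  note m = this
  have "max_chain m" unfolding max_chain_def
  proof (intro conjI allI impI)
    show "is_chain m" using m by simp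
    fix D assume D: "is_chain D \<and> m \<subseteq> D"
    then have "D \<in> {C. is_chain C \<and> S \<subseteq> C}" using m by auto
    then show "D = m" using m(2) D by auto
  qed
  then show ?thesis using m by auto
qed

lemma max_chain_insert:
  assumes "max_chain C" "\<forall>c\<in>C. c \<le> z \<or> z \<le> c" shows "z \<in> C"
proof -
  have "is_chain (insert z C)" using assms unfolding max_chain_def is_chain_def by auto
  then show ?thesis using assms(1) unfolding max_chain_def by blast
qed

lemma max_chain_bot: "max_chain (C::'a::bounded_lattice set) \<Longrightarrow> bot \<in> C"
  by (rule max_chain_insert) auto
lemma max_chain_top: "max_chain (C::'a::bounded_lattice set) \<Longrightarrow> top \<in> C"
  by (rule max_chain_insert) auto

lemma max_chain_cmp: "max_chain C \<Longrightarrow> a \<in> C \<Longrightarrow> b \<in> C \<Longrightarrow> a \<le> b \<or> b \<le> a"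
  unfolding max_chain_def is_chain_def by blast

lemma max_chain_consec:
  assumes "max_chain C" "a \<in> C" "b \<in> C" "a < b" "\<not> (\<exists>c\<in>C. a < c \<and> c < b)"
  shows "covers a b"
  unfolding covers_def
proof (intro conjI notI)
  show "a < b" by fact
  assume "\<exists>z. a < z \<and> z < b"
  then obtain z where z: "a < z" "z < b" by auto
  have "\<forall>c\<in>C. c \<le> z \<or> z \<le> c"
  proof
    fix c assume "c \<in> C"
    have "c \<le> a \<or> a \<le> c" "c \<le> b \<or> b \<le> c" using max_chain_cmp[OF assms(1)] \<open>c\<in>C\<close> assms by blast+
    show "c \<le> z \<or> z \<le> c"
    proof (cases "c \<le> a")
      case True then show ?thesis using z by auto
    next
      case False
      then have "a < c" using \<open>c \<le> a \<or> a \<le> c\<close> by auto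
      show ?thesis
      proof (cases "b \<le> c")
        case True then show ?thesis using z by auto
      next
        case False
        then have "c < b" using \<open>c \<le> b \<or> b \<le> c\<close> by auto
        then show ?thesis using \<open>a < c\<close> assms(5) \<open>c\<in>C\<close> by blast
      qed
    qed
  qed
  hence "z \<in> C" using max_chain_insert assms(1) by blast
  then show False using z assms(5) by blast
qed

lemma max_chain_succ:
  fixes C :: "'a::{finite,order} set"
  assumes "max_chain C" "a \<in> C" "\<exists>x\<in>C. a < x"
  shows "\<exists>b\<in>C. covers a b"
proof -
  have "is_chain {x\<in>C. a < x}" using assms(1) unfolding max_chain_def is_chain_def by blast
  from min_in_finite_chain[OF this] obtain b where b: "b \<in> C" "a < b" "\<forall>x\<in>C. a < x \<longrightarrow> b \<le> x"
    using assms(3) by blast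
  have "covers a b" apply (rule max_chain_consec[OF assms(1,2) b(1,2)])
    using b(3) by (meson leD)
  then show ?thesis using b by auto
qed

lemma max_chain_pred:
  fixes C :: "'a::{finite,order} set"
  assumes "max_chain C" "b \<in> C" "\<exists>x\<in>C. x < b"
  shows "\<exists>a\<in>C. covers a b"
proof -
  have "is_chain {x\<in>C. x < b}" using assms(1) unfolding max_chain_def is_chain_def by blast
  from max_in_finite_chain[OF this] obtain a where a: "a \<in> C" "a < b" "\<forall>x\<in>C. x < b \<longrightarrow> x \<le> a"
    using assms(3) by blast
  have "covers a b" apply (rule max_chain_consec[OF assms(1) a(1) assms(2) a(2)])
    using a(3) by (meson leD)
  then show ?thesis using a by auto
qed



lemma J_sup:
  fixes j u v :: "'a::{finite,distrib_lattice,bounded_lattice}"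
  assumes "j \<in> Jirr" "j \<le> sup u v" shows "j \<le> u \<or> j \<le> v"
proof -
  have "j = inf j (sup u v)" using assms(2) by (simp add: inf_absorb1)
  also have "\<dots> = sup (inf j u) (inf j v)" by (rule inf_sup_distrib1)
  finally have "j = inf j u \<or> j = inf j v" using assms(1) unfolding Jirr_def by blast
  then show ?thesis by (metis inf.cobounded2)
qed

lemma coatom_less: "coatom (c::'a::bounded_lattice) \<Longrightarrow> c < top"
  unfolding coatom_def covers_def by auto

lemma coatom_above: "coatom (c::'a::bounded_lattice) \<Longrightarrow> c \<le> x \<Longrightarrow> x = c \<or> x = top"
  unfolding coatom_def covers_def by (metis order.not_eq_order_implies_strict top.extremum_strict top_greatest)

lemma coatom_sup:
  fixes c x :: "'a::bounded_lattice"
  assumes "coatom c" "\<not> x \<le> c" shows "sup x c = top"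
proof -
  have "c \<le> sup x c" by simp
  hence "sup x c = c \<or> sup x c = top" using coatom_above[OF assms(1)] by blast
  then show ?thesis using assms(2) by (metis sup.cobounded1)
qed

lemma coatom_ne: 
  fixes c c' :: "'a::bounded_lattice"
  assumes "coatom c" "coatom c'" "c \<noteq> c'" shows "\<not> c' \<le> c"
  using coatom_above[OF assms(2)] assms coatom_less by (metis order.strict_iff_not)

lemma J_dich:
  fixes j c x :: "'a::{finite,distrib_lattice,bounded_lattice}"
  assumes "j \<in> Jirr" "coatom c" "\<not> j \<le> c" shows "j \<le> x \<or> x \<le> c"
proof (rule ccontr)
  assume "\<not> (j \<le> x \<or> x \<le> c)"
  hence "sup x c = top" "\<not> j \<le> x" using coatom_sup assms by auto
  hence "j \<le> sup x c" by simp
  then show False using J_sup[OF assms(1)] assms(3) \<open>\<not> j \<le> x\<close> by blast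
qed

lemma J_below:
  fixes x c :: "'a::{finite,distrib_lattice,bounded_lattice}"
  shows "\<not> x \<le> c \<Longrightarrow> \<exists>j\<in>Jirr. j \<le> x \<and> \<not> j \<le> c"
proof (induction x rule: measure_induct_rule[of "\<lambda>y. card {z. z < y}"])
  case (less x)
  show ?case
  proof (cases "x \<in> Jirr")
    case True then show ?thesis using less.prems by auto
  next
    case False
    have "x \<noteq> bot" using less.prems by auto
    then obtain y z where yz: "x = sup y z" "x \<noteq> y" "x \<noteq> z" using False unfolding Jirr_def by auto
    have "y < x" "z < x" using yz by (auto simp: less_le)
    have "\<not> y \<le> c \<or> \<not> z \<le> c" using less.prems yz(1) by auto
    moreover have "card {w. w < y} < card {w. w < x}"
      using \<open>y < x\<close> by (intro psubset_card_mono) auto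
    moreover have "card {w. w < z} < card {w. w < x}"
      using \<open>z < x\<close> by (intro psubset_card_mono) auto
    ultimately show ?thesis using less.IH \<open>y < x\<close> \<open>z < x\<close>
      by (meson order.strict_implies_order order_trans)
  qed
qed

lemma J_unique:
  fixes c j1 j2 :: "'a::{finite,distrib_lattice,bounded_lattice}"
  assumes "coatom c" "j1 \<in> Jirr" "j2 \<in> Jirr" "\<not> j1 \<le> c" "\<not> j2 \<le> c"
  shows "j1 = j2"
proof -
  have "j1 \<le> j2" using J_sup[OF assms(2), of j2 c] coatom_sup[OF assms(1,5)] assms(4) by auto
  moreover have "j2 \<le> j1" using J_sup[OF assms(3), of j1 c] coatom_sup[OF assms(1,4)] assms(5) by auto
  ultimately show ?thesis by auto
qed

lemma J_other_coatom:
  fixes c c' j :: "'a::{finite,distrib_lattice,bounded_lattice}"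
  assumes "coatom c" "coatom c'" "c \<noteq> c'" "j \<in> Jirr" "\<not> j \<le> c" shows "j \<le> c'"
proof -
  have "sup c' c = top" using coatom_sup[OF assms(1) coatom_ne[OF assms(1,2,3)]] .
  then show ?thesis using J_sup[OF assms(4), of c' c] assms(5) by auto
qed

lemma coatom_exists_J:
  fixes c :: "'a::{finite,distrib_lattice,bounded_lattice}"
  assumes "coatom c" shows "\<exists>j\<in>Jirr. \<not> j \<le> c"
  using J_below[of top c] coatom_less[OF assms] by auto


lemma seg_param:
  fixes p q r :: "real \<times> real"
  assumes "r \<in> closed_segment p q"
  shows "\<exists>u. 0 \<le> u \<and> u \<le> 1 \<and> fst r = (1-u)* fst p + u* fst q \<and> snd r = (1-u)* snd p + u* snd q"
  using assms by (auto simp: closed_segment_def)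

lemma seg_snd:
  fixes p q r :: "real \<times> real"
  assumes "r \<in> closed_segment p q" "snd p \<le> snd q"
  shows "snd p \<le> snd r \<and> snd r \<le> snd q"
proof -
  obtain u where u: "0 \<le> u" "u \<le> 1" "snd r = (1-u)* snd p + u* snd q" using seg_param[OF assms(1)] by blast
  have "snd r = snd p + u * (snd q - snd p)" using u by (simp add: algebra_simps)
  moreover have "0 \<le> u * (snd q - snd p)" "u * (snd q - snd p) \<le> snd q - snd p"
    using u assms(2) by (auto intro: mult_nonneg_nonneg mult_left_le_one_le)
  ultimately show ?thesis by auto
qed

lemma seg_fst:
  fixes p q r :: "real \<times> real"
  assumes "r \<in> closed_segment p q" "snd p < snd q"
  shows "fst r = fst p + (snd r - snd p) / (snd q - snd p) * (fst q - fst p)"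
proof -
  obtain u where u: "0 \<le> u" "u \<le> 1" "fst r = (1-u)* fst p + u* fst q" "snd r = (1-u)* snd p + u* snd q"
    using seg_param[OF assms(1)] by blast
  have "snd r - snd p = u * (snd q - snd p)" using u by (simp add: algebra_simps)
  hence uu: "u = (snd r - snd p) / (snd q - snd p)" using assms(2) by (simp add: field_simps)
  have "fst r = fst p + u * (fst q - fst p)" using u(3) by (simp add: algebra_simps)
  then show ?thesis using uu by simp
qed

lemma seg_eq:
  fixes p q r r' :: "real \<times> real"
  assumes "r \<in> closed_segment p q" "r' \<in> closed_segment p q" "snd r = snd r'" "snd p < snd q"
  shows "r = r'"
  using seg_fst[OF assms(1,4)] seg_fst[OF assms(2,4)] assms(3) by (simp add: prod_eq_iff)

lemma seg_exists:
  fixes p q :: "real \<times> real"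
  assumes "snd p \<le> h" "h \<le> snd q" "snd p < snd q"
  shows "(fst p + (h - snd p) / (snd q - snd p) * (fst q - fst p), h) \<in> closed_segment p q"
proof -
  define u where "u = (h - snd p) / (snd q - snd p)"
  have u: "0 \<le> u" "u \<le> 1" using assms unfolding u_def by (auto simp: field_simps)
  have uq: "u * (snd q - snd p) = h - snd p" using assms unfolding u_def by simp
  have "fst ((1 - u) *\<^sub>R p + u *\<^sub>R q) = fst p + u * (fst q - fst p)" by (simp add: algebra_simps)
  moreover have "snd ((1 - u) *\<^sub>R p + u *\<^sub>R q) = snd p + u * (snd q - snd p)" by (simp add: algebra_simps)
  ultimately have "(fst p + u * (fst q - fst p), h) = (1 - u) *\<^sub>R p + u *\<^sub>R q"
    using uq by (simp add: prod_eq_iff)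
  then show ?thesis unfolding closed_segment_def u_def[symmetric] using u by blast
qed

lemma seg_end_low:
  fixes p q r :: "real \<times> real"
  assumes "r \<in> closed_segment p q" "snd r = snd p" "snd p < snd q" shows "r = p"
  using seg_eq[OF assms(1) ends_in_segment(1)] assms by auto

lemma seg_end_high:
  fixes p q r :: "real \<times> real"
  assumes "r \<in> closed_segment p q" "snd r = snd q" "snd p < snd q" shows "r = q"
  using seg_eq[OF assms(1) ends_in_segment(2)] assms by auto

lemma chain_path_iff:
  "p \<in> chain_path pos C \<longleftrightarrow> (\<exists>a b. a \<in> C \<and> b \<in> C \<and> covers a b \<and> p \<in> closed_segment (pos a) (pos b))"
  unfolding chain_path_def by blast

definition xC :: "('a::order \<Rightarrow> real \<times> real) \<Rightarrow> 'a set \<Rightarrow> real \<Rightarrow> real" where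
  "xC pos C h = fst (SOME p. p \<in> chain_path pos C \<and> snd p = h)"

locale PL =
  fixes pos :: "'a::{finite,distrib_lattice,bounded_lattice} \<Rightarrow> real \<times> real"
  assumes planar: "planar_diagram pos" and nontriv: "(bot::'a) \<noteq> top"
begin

lemma bot_lt_top: "(bot::'a) < top" using nontriv by (metis bot.not_eq_extremum)

lemma up: "covers a b \<Longrightarrow> snd (pos a) < snd (pos b)"
  using planar unfolding planar_diagram_def by blast

lemma pos_inj: "pos a = pos b \<Longrightarrow> a = b"
  using planar unfolding planar_diagram_def inj_def by blast

lemma seg_disj:
  assumes "covers a b" "covers c d" "(a,b) \<noteq> (c,d)"
    "p \<in> closed_segment (pos a) (pos b)" "p \<in> closed_segment (pos c) (pos d)"
  shows "p \<in> {pos a, pos b} \<inter> {pos c, pos d}"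
  using planar assms unfolding planar_diagram_def by blast

lemma hless: "x < y \<Longrightarrow> snd (pos x) < snd (pos y)"
  by (rule hgt_mono[OF up])

lemma hle: "x \<le> y \<Longrightarrow> snd (pos x) \<le> snd (pos y)"
  using hless by (metis order.order_iff_strict order_refl)

lemma hrange: "snd (pos bot) \<le> snd (pos x)" "snd (pos x) \<le> snd (pos top)"
  by (auto intro: hle)

lemma chain_hless:
  assumes "max_chain C" "x \<in> C" "y \<in> C" "snd (pos x) < snd (pos y)" shows "x < y"
  using max_chain_cmp[OF assms(1-3)] assms(4) hle by (metis leD order.order_iff_strict)

lemma chain_hle:
  assumes "max_chain C" "x \<in> C" "y \<in> C" "snd (pos x) \<le> snd (pos y)" shows "x \<le> y"
  using max_chain_cmp[OF assms(1-3)] assms(4) hless by (metis leD order.order_iff_strict)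

lemma path_snd:
  assumes "p \<in> closed_segment (pos a) (pos b)" "covers a b"
  shows "snd (pos a) \<le> snd p \<and> snd p \<le> snd (pos b)"
  using seg_snd[OF assms(1)] up[OF assms(2)] by auto

lemma path_unique:
  assumes "max_chain C" "p \<in> chain_path pos C" "q \<in> chain_path pos C" "snd p = snd q"
  shows "p = q"
proof -
  obtain a b where ab: "a \<in> C" "b \<in> C" "covers a b" "p \<in> closed_segment (pos a) (pos b)"
    using assms(2) chain_path_iff by metis
  obtain c d where cd: "c \<in> C" "d \<in> C" "covers c d" "q \<in> closed_segment (pos c) (pos d)"
    using assms(3) chain_path_iff by metis
  have gen: "p = q" if "a \<in> C" "b \<in> C" "covers a b" "p \<in> closed_segment (pos a) (pos b)"
    "c \<in> C" "d \<in> C" "covers c d" "q \<in> closed_segment (pos c) (pos d)" "snd p = snd q" "a < c"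
    for a b c d p q
  proof -
    have "b \<le> c"
    proof (rule ccontr)
      assume "\<not> b \<le> c"
      hence "c < b" using max_chain_cmp[OF assms(1) that(2,5)] by auto
      then show False using that(3,10) unfolding covers_def by auto
    qed
    have f1: "snd p \<le> snd (pos b)" using path_snd[OF that(4,3)] by simp
    have f2: "snd (pos c) \<le> snd q" using path_snd[OF that(8,7)] by simp
    have f3: "snd (pos b) \<le> snd (pos c)" using hle \<open>b \<le> c\<close> by auto
    from f1 f2 f3 have e: "snd p = snd (pos b)" "snd q = snd (pos c)" "snd (pos b) = snd (pos c)"
      using that(9) by auto
    have "b = c" using e(3) \<open>b \<le> c\<close> hless by (metis order.order_iff_strict order.irrefl)
    have "p = pos b" using seg_end_high[OF that(4) e(1) up[OF that(3)]] .
    moreover have "q = pos c" using seg_end_low[OF that(8) e(2) up[OF that(7)]] .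
    ultimately show ?thesis using \<open>b = c\<close> by simp
  qed
  show ?thesis
  proof (cases "a = c")
    case True
    have "b = d"
    proof -
      have "b \<le> d \<or> d \<le> b" using max_chain_cmp[OF assms(1) ab(2) cd(2)] .
      then show ?thesis using ab(3) cd(3) True unfolding covers_def
        by (metis order.order_iff_strict)
    qed
    then show ?thesis using seg_eq[OF ab(4)] cd(4) True assms(4) up[OF ab(3)] by auto
  next
    case False
    hence "a < c \<or> c < a" using max_chain_cmp[OF assms(1) ab(1) cd(1)] by (auto simp: order.order_iff_strict)
    then show ?thesis
    proof
      assume "a < c" then show ?thesis using gen[OF ab cd assms(4)] by blast
    next
      assume "c < a" then show ?thesis using gen[OF cd ab] assms(4) by auto
    qed
  qed
qed

lemma path_edge_exists:
  assumes "max_chain C" "snd (pos bot) \<le> h" "h \<le> snd (pos top)"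
  shows "\<exists>a b. a \<in> C \<and> b \<in> C \<and> covers a b \<and> snd (pos a) \<le> h \<and> h \<le> snd (pos b)"
proof -
  have "is_chain {x\<in>C. snd (pos x) \<le> h}" using assms(1) unfolding max_chain_def is_chain_def by blast
  moreover have "bot \<in> {x\<in>C. snd (pos x) \<le> h}" using max_chain_bot[OF assms(1)] assms(2) by auto
  ultimately obtain a where a: "a \<in> C" "snd (pos a) \<le> h" "\<forall>x\<in>C. snd (pos x) \<le> h \<longrightarrow> x \<le> a"
    using max_in_finite_chain by (metis (no_types, lifting) empty_iff mem_Collect_eq)
  show ?thesis
  proof (cases "a = top")
    case True
    have "\<exists>x\<in>C. x < top" using max_chain_bot[OF assms(1)] bot_lt_top by blast
    then obtain a' where "a' \<in> C" "covers a' top"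
      using max_chain_pred[OF assms(1) max_chain_top[OF assms(1)]] by blast
    moreover have "snd (pos a') \<le> h" using hle a True by (metis order_trans top_greatest)
    ultimately show ?thesis using max_chain_top[OF assms(1)] assms(3) True a by blast
  next
    case False
    have "\<exists>x\<in>C. a < x" using max_chain_top[OF assms(1)] False top.not_eq_extremum by blast
    then obtain b where b: "b \<in> C" "covers a b" using max_chain_succ[OF assms(1) a(1)] by blast
    have "\<not> snd (pos b) \<le> h"
    proof
      assume "snd (pos b) \<le> h" then have "b \<le> a" using a b by auto
      then show False using b(2) unfolding covers_def by auto
    qed
    then have "h \<le> snd (pos b)" by linarith
    then show ?thesis using a b by blast
  qed
qed

lemma path_exists:
  assumes "max_chain C" "snd (pos bot) \<le> h" "h \<le> snd (pos top)"
  shows "\<exists>p\<in>chain_path pos C. snd p = h"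
proof -
  obtain a b where ab: "a \<in> C" "b \<in> C" "covers a b" "snd (pos a) \<le> h" "h \<le> snd (pos b)"
    using path_edge_exists[OF assms] by blast
  have "(fst (pos a) + (h - snd (pos a)) / (snd (pos b) - snd (pos a)) * (fst (pos b) - fst (pos a)), h)
     \<in> closed_segment (pos a) (pos b)" by (rule seg_exists[OF ab(4,5) up[OF ab(3)]])
  then have "(fst (pos a) + (h - snd (pos a)) / (snd (pos b) - snd (pos a)) * (fst (pos b) - fst (pos a)), h)
     \<in> chain_path pos C" unfolding chain_path_iff using ab by blast
  then show ?thesis by (intro bexI) auto
qed

lemma xC_eq:
  assumes "max_chain C" "p \<in> chain_path pos C"
  shows "xC pos C (snd p) = fst p"
proof -
  have "\<exists>q. q \<in> chain_path pos C \<and> snd q = snd p" using assms by blast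
  then have "(SOME q. q \<in> chain_path pos C \<and> snd q = snd p) \<in> chain_path pos C \<and>
      snd (SOME q. q \<in> chain_path pos C \<and> snd q = snd p) = snd p" by (rule someI_ex)
  then have "(SOME q. q \<in> chain_path pos C \<and> snd q = snd p) = p" using path_unique assms by blast
  then show ?thesis unfolding xC_def by simp
qed

lemma xC_in:
  assumes "max_chain C" "snd (pos bot) \<le> h" "h \<le> snd (pos top)"
  shows "(xC pos C h, h) \<in> chain_path pos C"
proof -
  obtain p where "p \<in> chain_path pos C" "snd p = h" using path_exists[OF assms] by blast
  then have "xC pos C h = fst p" using xC_eq[OF assms(1)] by blast
  then have "(xC pos C h, h) = p" using \<open>snd p = h\<close> by (simp add: prod_eq_iff)
  then show ?thesis using \<open>p \<in> chain_path pos C\<close> by simp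
qed

lemma xC_in': "max_chain C \<Longrightarrow> (xC pos C (snd (pos x)), snd (pos x)) \<in> chain_path pos C"
  using xC_in hrange by blast

lemma vert_in_path:
  assumes "max_chain C" "z \<in> C" shows "pos z \<in> chain_path pos C"
proof (cases "z = top")
  case True
  have "\<exists>x\<in>C. x < top" using max_chain_bot[OF assms(1)] bot_lt_top by blast
  then obtain a where "a \<in> C" "covers a top" using max_chain_pred[OF assms(1) max_chain_top[OF assms(1)]] by blast
  then show ?thesis using True assms chain_path_iff by (metis ends_in_segment(2))
next
  case False
  have "\<exists>x\<in>C. z < x" using max_chain_top[OF assms(1)] False top.not_eq_extremum by blast
  then obtain b where "b \<in> C" "covers z b" using max_chain_succ[OF assms] by blast
  then show ?thesis using assms chain_path_iff by (metis ends_in_segment(1))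
qed

lemma xC_vert: "max_chain C \<Longrightarrow> z \<in> C \<Longrightarrow> xC pos C (snd (pos z)) = fst (pos z)"
  using xC_eq vert_in_path by blast

lemma has_edge: "\<exists>w. covers (x::'a) w \<or> covers w x"
proof (cases "x = top")
  case True
  then have "bot < x" using bot_lt_top by simp
  then show ?thesis using cover_exists_below by blast
next
  case False
  then have "x < top" using top.not_eq_extremum by blast
  then show ?thesis using cover_exists by blast
qed

lemma path_vert:
  assumes "max_chain C" "pos x \<in> chain_path pos C" shows "x \<in> C"
proof -
  obtain a b where ab: "a \<in> C" "b \<in> C" "covers a b" "pos x \<in> closed_segment (pos a) (pos b)"
    using assms(2) chain_path_iff by metis
  obtain w where "covers x w \<or> covers w x" using has_edge by blast
  then show ?thesis
  proof
    assume w: "covers x w"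
    show ?thesis
    proof (cases "(x,w) = (a,b)")
      case True then show ?thesis using ab by auto
    next
      case False
      then have "pos x \<in> {pos a, pos b}" using seg_disj[OF w ab(3) _ ends_in_segment(1) ab(4)] by auto
      then show ?thesis using pos_inj ab by auto
    qed
  next
    assume w: "covers w x"
    show ?thesis
    proof (cases "(w,x) = (a,b)")
      case True then show ?thesis using ab by auto
    next
      case False
      then have "pos x \<in> {pos a, pos b}" using seg_disj[OF w ab(3) _ ends_in_segment(2) ab(4)] by auto
      then show ?thesis using pos_inj ab by auto
    qed
  qed
qed

end


context PL begin

lemma xC_edge:
  assumes "max_chain C" "a \<in> C" "b \<in> C" "covers a b" "snd (pos a) \<le> h" "h \<le> snd (pos b)"
  shows "xC pos C h = fst (pos a) + (h - snd (pos a)) * ((fst (pos b) - fst (pos a)) / (snd (pos b) - snd (pos a)))"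
proof -
  have "(fst (pos a) + (h - snd (pos a)) / (snd (pos b) - snd (pos a)) * (fst (pos b) - fst (pos a)), h)
     \<in> closed_segment (pos a) (pos b)" by (rule seg_exists[OF assms(5,6) up[OF assms(4)]])
  then have "(fst (pos a) + (h - snd (pos a)) / (snd (pos b) - snd (pos a)) * (fst (pos b) - fst (pos a)), h)
     \<in> chain_path pos C" unfolding chain_path_iff using assms by blast
  from xC_eq[OF assms(1) this] show ?thesis by simp
qed

lemma xC_cont:
  assumes "max_chain C"
  shows "continuous_on {snd (pos bot)..snd (pos top)} (xC pos C)"
proof -
  let ?I = "{(a,b). a \<in> C \<and> b \<in> C \<and> covers a b}"
  let ?U = "\<lambda>(a,b). {snd (pos a)..snd (pos b)}"
  have "continuous_on (\<Union>i\<in>?I. ?U i) (xC pos C)"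
  proof (rule continuous_on_closed_Union)
    show "finite ?I" by (rule finite)
    fix i assume "i \<in> ?I"
    then obtain a b where i: "i = (a,b)" "a \<in> C" "b \<in> C" "covers a b" by auto
    show "closed (?U i)" using i by simp
    have "continuous_on (?U i) (\<lambda>h. fst (pos a) + (h - snd (pos a)) * ((fst (pos b) - fst (pos a)) / (snd (pos b) - snd (pos a))))"
      by (intro continuous_intros)
    moreover have "\<And>h. h \<in> ?U i \<Longrightarrow> xC pos C h = fst (pos a) + (h - snd (pos a)) * ((fst (pos b) - fst (pos a)) / (snd (pos b) - snd (pos a)))"
      using xC_edge[OF assms i(2,3,4)] i(1) by auto
    ultimately show "continuous_on (?U i) (xC pos C)" using continuous_on_cong by (metis (no_types, lifting))
  qed
  moreover have "{snd (pos bot)..snd (pos top)} \<subseteq> (\<Union>i\<in>?I. ?U i)"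
  proof
    fix h assume "h \<in> {snd (pos bot)..snd (pos top)}"
    then obtain a b where "a \<in> C" "b \<in> C" "covers a b" "snd (pos a) \<le> h" "h \<le> snd (pos b)"
      using path_edge_exists[OF assms, of h] by auto
    then have "(a,b) \<in> ?I" "h \<in> ?U (a,b)" by auto
    then show "h \<in> (\<Union>i\<in>?I. ?U i)" by blast
  qed
  ultimately show ?thesis using continuous_on_subset by blast
qed

lemma cross:
  assumes C: "max_chain C" and C': "max_chain C'" and h: "h1 \<le> h2" "snd (pos bot) \<le> h1" "h2 \<le> snd (pos top)"
    and l: "xC pos C h1 < xC pos C' h1" and r: "xC pos C' h2 < xC pos C h2"
  shows "\<exists>z. z \<in> C \<and> z \<in> C' \<and> h1 < snd (pos z) \<and> snd (pos z) < h2"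
proof -
  let ?g = "\<lambda>h. xC pos C h - xC pos C' h"
  have "continuous_on {snd (pos bot)..snd (pos top)} ?g"
    by (intro continuous_on_diff xC_cont C C')
  then have "continuous_on {h1..h2} ?g" by (rule continuous_on_subset) (use h in auto)
  moreover have "?g h1 \<le> 0" "0 \<le> ?g h2" using l r by auto
  ultimately obtain hs where hs: "h1 \<le> hs" "hs \<le> h2" "?g hs = 0" using IVT'[of ?g h1 0 h2] h(1) by blast
  have hs1: "h1 < hs"
  proof (rule ccontr)
    assume "\<not> h1 < hs" then have "hs = h1" using hs(1) by simp
    then show False using hs(3) l by simp
  qed
  have hs2: "hs < h2"
  proof (rule ccontr)
    assume "\<not> hs < h2" then have "hs = h2" using hs(2) by simp
    then show False using hs(3) r by simp
  qed
  have rng: "snd (pos bot) \<le> hs" "hs \<le> snd (pos top)" using hs h by auto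
  define p where "p = (xC pos C hs, hs)"
  have pC: "p \<in> chain_path pos C" unfolding p_def by (rule xC_in[OF C rng])
  have "p = (xC pos C' hs, hs)" unfolding p_def using hs(3) by simp
  then have pC': "p \<in> chain_path pos C'" using xC_in[OF C' rng] by simp
  obtain a b where ab: "a \<in> C" "b \<in> C" "covers a b" "p \<in> closed_segment (pos a) (pos b)"
    using pC chain_path_iff by metis
  obtain c d where cd: "c \<in> C'" "d \<in> C'" "covers c d" "p \<in> closed_segment (pos c) (pos d)"
    using pC' chain_path_iff by metis
  show ?thesis
  proof (cases "(a,b) = (c,d)")
    case True
    then have "a \<in> C'" "b \<in> C'" using cd by auto
    have sa: "snd (pos a) \<le> hs" "hs \<le> snd (pos b)" using path_snd[OF ab(4,3)] p_def by auto
    have "h1 < snd (pos a)"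
    proof (rule ccontr)
      assume "\<not> h1 < snd (pos a)"
      then have "snd (pos a) \<le> h1" by simp
      have "xC pos C h1 = xC pos C' h1"
        using xC_edge[OF C ab(1-3) \<open>snd (pos a) \<le> h1\<close>] xC_edge[OF C' \<open>a \<in> C'\<close> \<open>b \<in> C'\<close> ab(3) \<open>snd (pos a) \<le> h1\<close>]
          sa hs1 by simp
      then show False using l by simp
    qed
    then show ?thesis using \<open>a \<in> C'\<close> ab(1) sa hs2 by auto
  next
    case False
    then have "p \<in> {pos a, pos b} \<inter> {pos c, pos d}" using seg_disj[OF ab(3) cd(3) False ab(4) cd(4)] by simp
    then obtain z z' where z: "z \<in> {a,b}" "z' \<in> {c,d}" "p = pos z" "p = pos z'"
      by (metis IntD1 IntD2 insert_iff empty_iff)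
    then have "z = z'" using pos_inj by simp
    have "snd (pos z) = hs" using z(3) unfolding p_def by (metis snd_conv)
    moreover have "z \<in> C" using z(1) ab(1,2) by auto
    moreover have "z \<in> C'" using z(2) cd(1,2) \<open>z = z'\<close> by auto
    ultimately have "z \<in> C" "z \<in> C'" "snd (pos z) = hs" by auto
    then show ?thesis using hs1 hs2 by auto
  qed
qed

lemma agree:
  assumes C: "max_chain C" and C': "max_chain C'" and a: "a \<in> C" "\<forall>x\<in>C. x \<le> a \<longrightarrow> x \<in> C'"
    and h: "snd (pos bot) \<le> h" "h \<le> snd (pos a)"
  shows "xC pos C h = xC pos C' h"
proof -
  have rng: "h \<le> snd (pos top)" using h(2) hrange(2)[of a] by linarith
  obtain u v where uv: "u \<in> C" "v \<in> C" "covers u v" "snd (pos u) \<le> h" "h \<le> snd (pos v)"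
    using path_edge_exists[OF C h(1) rng] by blast
  show ?thesis
  proof (cases "v \<le> a")
    case True
    then have "u \<in> C'" "v \<in> C'" using a uv(1,2,3) unfolding covers_def by auto
    then show ?thesis using xC_edge[OF C uv] xC_edge[OF C' \<open>u \<in> C'\<close> \<open>v \<in> C'\<close> uv(3-5)] by simp
  next
    case False
    then have "a < v" using max_chain_cmp[OF C a(1) uv(2)] by auto
    have "u \<le> a"
    proof (rule ccontr)
      assume "\<not> u \<le> a"
      then have "a < u" using max_chain_cmp[OF C a(1) uv(1)] by auto
      then show False using hless[of a u] h(2) uv(4) by auto
    qed
    have "u = a"
    proof (rule ccontr)
      assume "u \<noteq> a" then have "u < a" using \<open>u \<le> a\<close> by auto
      then show False using \<open>a < v\<close> uv(3) unfolding covers_def by auto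
    qed
    then have "h = snd (pos a)" using h(2) uv(4) by auto
    moreover have "a \<in> C'" using a by auto
    ultimately show ?thesis using xC_vert[OF C a(1)] xC_vert[OF C'] by simp
  qed
qed

lemma xC_ne:
  assumes "max_chain C" "x \<notin> C" shows "xC pos C (snd (pos x)) \<noteq> fst (pos x)"
proof
  assume "xC pos C (snd (pos x)) = fst (pos x)"
  then have "(xC pos C (snd (pos x)), snd (pos x)) = pos x" by (simp add: prod_eq_iff)
  then have "pos x \<in> chain_path pos C" using xC_in'[OF assms(1), of x] by simp
  then show False using path_vert[OF assms(1)] assms(2) by simp
qed

end


definition rf :: "real \<times> real \<Rightarrow> real \<times> real" where "rf p = (- fst p, snd p)"

lemma rf_rf[simp]: "rf (rf p) = p" by (simp add: rf_def)
lemma rf_fst[simp]: "fst (rf p) = - fst p" by (simp add: rf_def)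
lemma rf_snd[simp]: "snd (rf p) = snd p" by (simp add: rf_def)
lemma rf_inj: "rf p = rf q \<Longrightarrow> p = q" by (metis rf_rf)

lemma rf_linear: "linear rf"
  by (rule linearI) (auto simp: rf_def prod_eq_iff)

lemma seg_rf: "closed_segment (rf p) (rf q) = rf ` closed_segment p q"
  using closed_segment_linear_image[OF rf_linear] by simp

lemma mem_seg_rf: "r \<in> closed_segment (rf p) (rf q) \<longleftrightarrow> rf r \<in> closed_segment p q"
  unfolding seg_rf by (metis image_iff rf_rf)

definition LEFTOF :: "('a::order \<Rightarrow> real \<times> real) \<Rightarrow> 'a \<Rightarrow> 'a \<Rightarrow> bool" where
  "LEFTOF pos x y \<longleftrightarrow> (\<forall>C. max_chain C \<and> y \<in> C \<longrightarrow> fst (pos x) < xC pos C (snd (pos x)))"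

definition RIGHTOF :: "('a::order \<Rightarrow> real \<times> real) \<Rightarrow> 'a \<Rightarrow> 'a \<Rightarrow> bool" where
  "RIGHTOF pos x y \<longleftrightarrow> (\<forall>C. max_chain C \<and> y \<in> C \<longrightarrow> xC pos C (snd (pos x)) < fst (pos x))"

lemma planar_rf:
  fixes pos :: "'a::bounded_lattice \<Rightarrow> real \<times> real"
  assumes "planar_diagram pos" shows "planar_diagram (\<lambda>x. rf (pos x))"
  unfolding planar_diagram_def
proof (intro conjI allI impI)
  show "inj (\<lambda>x. rf (pos x))" using assms unfolding planar_diagram_def inj_def by (metis rf_rf)
  fix a b :: 'a assume "covers a b" then show "snd (rf (pos a)) < snd (rf (pos b))"
    using assms unfolding planar_diagram_def by simp
next
  fix a b c d :: 'a assume H: "covers a b \<and> covers c d \<and> (a, b) \<noteq> (c, d)"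
  show "closed_segment (rf (pos a)) (rf (pos b)) \<inter> closed_segment (rf (pos c)) (rf (pos d))
          \<subseteq> {rf (pos a), rf (pos b)} \<inter> {rf (pos c), rf (pos d)}"
  proof
    fix r assume "r \<in> closed_segment (rf (pos a)) (rf (pos b)) \<inter> closed_segment (rf (pos c)) (rf (pos d))"
    then have "rf r \<in> closed_segment (pos a) (pos b) \<inter> closed_segment (pos c) (pos d)"
      by (simp add: mem_seg_rf)
    then have "rf r \<in> {pos a, pos b} \<inter> {pos c, pos d}" using assms H unfolding planar_diagram_def by blast
    then have "rf r = pos a \<or> rf r = pos b" "rf r = pos c \<or> rf r = pos d" by auto
    then have "r = rf (pos a) \<or> r = rf (pos b)" "r = rf (pos c) \<or> r = rf (pos d)" by (metis rf_rf)+
    then show "r \<in> {rf (pos a), rf (pos b)} \<inter> {rf (pos c), rf (pos d)}" by auto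
  qed
qed

lemma path_rf: "p \<in> chain_path (\<lambda>x. rf (pos x)) C \<longleftrightarrow> rf p \<in> chain_path pos C"
  unfolding chain_path_iff by (simp add: mem_seg_rf)

lemma LBound_rf: "LBound (\<lambda>x. rf (pos x)) = RBound pos"
proof -
  have "(- fst (pos x) - t, y) \<in> closed_segment (rf (pos a)) (rf (pos b)) \<longleftrightarrow>
        (fst (pos x) + t, y) \<in> closed_segment (pos a) (pos b)" for x t y a b
  proof -
    have "(- fst (pos x) - t, y) = rf (fst (pos x) + t, y)" by (simp add: rf_def)
    then show ?thesis by (simp add: mem_seg_rf)
  qed
  then show ?thesis unfolding LBound_def RBound_def by simp
qed

lemma ljsp_rf: "ljsp (\<lambda>x. rf (pos x)) = rjsp pos"
  unfolding ljsp_def rjsp_def LBound_rf by simp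

context PL begin

lemma PL_rf: "PL (\<lambda>x. rf (pos x))"
  by unfold_locales (use planar_rf[OF planar] nontriv in auto)

lemma xC_rf:
  assumes "max_chain C" shows "xC (\<lambda>x. rf (pos x)) C (snd (pos z)) = - xC pos C (snd (pos z))"
proof -
  have "(xC pos C (snd (pos z)), snd (pos z)) \<in> chain_path pos C" by (rule xC_in'[OF assms])
  moreover have "(- xC pos C (snd (pos z)), snd (pos z)) = rf (xC pos C (snd (pos z)), snd (pos z))"
    by (simp add: rf_def)
  ultimately have "(- xC pos C (snd (pos z)), snd (pos z)) \<in> chain_path (\<lambda>x. rf (pos x)) C"
    by (simp add: path_rf)
  from PL.xC_eq[OF PL_rf assms this] show ?thesis by simp
qed

lemma LEFTOF_rf: "LEFTOF (\<lambda>x. rf (pos x)) x y \<longleftrightarrow> RIGHTOF pos x y"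
  unfolding LEFTOF_def RIGHTOF_def using xC_rf by auto

lemma RIGHTOF_rf: "RIGHTOF (\<lambda>x. rf (pos x)) x y \<longleftrightarrow> LEFTOF pos x y"
  unfolding LEFTOF_def RIGHTOF_def using xC_rf by auto

end


context PL begin

lemma chain_of: "\<exists>C. max_chain C \<and> (x::'a) \<in> C"
  using extend_chain[of "{x}"] unfolding is_chain_def by auto

lemma chain_of2: "(x::'a) \<le> y \<Longrightarrow> \<exists>C. max_chain C \<and> x \<in> C \<and> y \<in> C"
  using extend_chain[of "{x,y}"] unfolding is_chain_def by auto

lemma notin_incomp: "max_chain C \<Longrightarrow> y \<in> C \<Longrightarrow> \<not> x \<le> y \<Longrightarrow> \<not> y \<le> x \<Longrightarrow> x \<notin> C"
  using max_chain_cmp by blast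

lemma UNI_L:
  assumes inc: "\<not> x \<le> y" "\<not> y \<le> x" and C: "max_chain C" "y \<in> C"
    and lt: "fst (pos x) < xC pos C (snd (pos x))"
  shows "LEFTOF pos x y"
  unfolding LEFTOF_def
proof (intro allI impI)
  fix C' assume C': "max_chain C' \<and> y \<in> C'"
  show "fst (pos x) < xC pos C' (snd (pos x))"
  proof (rule ccontr)
    assume "\<not> fst (pos x) < xC pos C' (snd (pos x))"
    moreover have "xC pos C' (snd (pos x)) \<noteq> fst (pos x)"
      using xC_ne C' notin_incomp inc by blast
    ultimately have lt': "xC pos C' (snd (pos x)) < fst (pos x)" by auto
    obtain Cx where Cx: "max_chain Cx" "x \<in> Cx" using chain_of by blast
    have yCx: "y \<notin> Cx" using notin_incomp[OF Cx] inc by blast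
    have x1: "xC pos Cx (snd (pos x)) = fst (pos x)" using xC_vert Cx by blast
    have y1: "xC pos C (snd (pos y)) = fst (pos y)" "xC pos C' (snd (pos y)) = fst (pos y)"
      using xC_vert C C' by blast+
    have ne: "xC pos Cx (snd (pos y)) \<noteq> fst (pos y)" using xC_ne[OF Cx(1) yCx] .
    consider "snd (pos x) = snd (pos y)" | "snd (pos x) < snd (pos y)" | "snd (pos y) < snd (pos x)" by linarith
    then show False
    proof cases
      case 1 then show ?thesis using y1 lt lt' by simp
    next
      case 2
      show ?thesis
      proof (cases "xC pos Cx (snd (pos y)) < fst (pos y)")
        case True
        obtain z where "z \<in> C'" "z \<in> Cx" "snd (pos x) < snd (pos z)" "snd (pos z) < snd (pos y)"
          using cross[OF conjunct1[OF C'] Cx(1) order.strict_implies_order[OF 2] hrange(1) hrange(2)] lt' x1 True y1 by auto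
        then have "x < z" "z < y" using chain_hless Cx C' by blast+
        then show False using inc by auto
      next
        case False
        then have "fst (pos y) < xC pos Cx (snd (pos y))" using ne by auto
        obtain z where "z \<in> Cx" "z \<in> C" "snd (pos x) < snd (pos z)" "snd (pos z) < snd (pos y)"
          using cross[OF Cx(1) C(1) order.strict_implies_order[OF 2] hrange(1) hrange(2)] lt x1 \<open>fst (pos y) < _\<close> y1 by auto
        then have "x < z" "z < y" using chain_hless Cx C by blast+
        then show False using inc by auto
      qed
    next
      case 3
      show ?thesis
      proof (cases "xC pos Cx (snd (pos y)) < fst (pos y)")
        case True
        obtain z where "z \<in> Cx" "z \<in> C'" "snd (pos y) < snd (pos z)" "snd (pos z) < snd (pos x)"
          using cross[OF Cx(1) conjunct1[OF C'] order.strict_implies_order[OF 3] hrange(1) hrange(2)] lt' x1 True y1 by auto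
        then have "y < z" "z < x" using chain_hless Cx C' by blast+
        then show False using inc by auto
      next
        case False
        then have "fst (pos y) < xC pos Cx (snd (pos y))" using ne by auto
        obtain z where "z \<in> C" "z \<in> Cx" "snd (pos y) < snd (pos z)" "snd (pos z) < snd (pos x)"
          using cross[OF C(1) Cx(1) order.strict_implies_order[OF 3] hrange(1) hrange(2)] lt x1 \<open>fst (pos y) < _\<close> y1 by auto
        then have "y < z" "z < x" using chain_hless Cx C by blast+
        then show False using inc by auto
      qed
    qed
  qed
qed


lemma UNI_R:
  assumes inc: "\<not> x \<le> y" "\<not> y \<le> x" and C: "max_chain C" "y \<in> C"
    and lt: "xC pos C (snd (pos x)) < fst (pos x)"
  shows "RIGHTOF pos x y"
proof -
  have "fst (rf (pos x)) < xC (\<lambda>x. rf (pos x)) C (snd (rf (pos x)))"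
    using lt xC_rf[OF C(1)] by simp
  from PL.UNI_L[OF PL_rf inc C this] show ?thesis using LEFTOF_rf by simp
qed

lemma DICH:
  assumes inc: "\<not> x \<le> y" "\<not> y \<le> x" shows "LEFTOF pos x y \<or> RIGHTOF pos x y"
proof -
  obtain C where C: "max_chain C" "y \<in> C" using chain_of by blast
  have "xC pos C (snd (pos x)) \<noteq> fst (pos x)" using xC_ne C notin_incomp inc by blast
  then show ?thesis using UNI_L[OF inc C] UNI_R[OF inc C] by linarith
qed

lemma LR_excl: "LEFTOF pos x y \<Longrightarrow> RIGHTOF pos x y \<Longrightarrow> False"
  unfolding LEFTOF_def RIGHTOF_def using chain_of[of y] by force

lemma SWAP_LR:
  assumes inc: "\<not> x \<le> y" "\<not> y \<le> x" and L: "LEFTOF pos x y"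
  shows "RIGHTOF pos y x"
proof -
  obtain Cx where Cx: "max_chain Cx" "x \<in> Cx" using chain_of by blast
  obtain Cy where Cy: "max_chain Cy" "y \<in> Cy" using chain_of by blast
  have ne: "xC pos Cx (snd (pos y)) \<noteq> fst (pos y)" using xC_ne Cx notin_incomp inc by blast
  have lx: "fst (pos x) < xC pos Cy (snd (pos x))" using L Cy unfolding LEFTOF_def by blast
  have x1: "xC pos Cx (snd (pos x)) = fst (pos x)" using xC_vert Cx by blast
  have y1: "xC pos Cy (snd (pos y)) = fst (pos y)" using xC_vert Cy by blast
  have "xC pos Cx (snd (pos y)) < fst (pos y)"
  proof (rule ccontr)
    assume "\<not> xC pos Cx (snd (pos y)) < fst (pos y)"
    then have gt: "fst (pos y) < xC pos Cx (snd (pos y))" using ne by auto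
    consider "snd (pos x) = snd (pos y)" | "snd (pos x) < snd (pos y)" | "snd (pos y) < snd (pos x)" by linarith
    then show False
    proof cases
      case 1 then show ?thesis using gt lx x1 y1 by simp
    next
      case 2
      obtain z where "z \<in> Cx" "z \<in> Cy" "snd (pos x) < snd (pos z)" "snd (pos z) < snd (pos y)"
        using cross[OF Cx(1) Cy(1) order.strict_implies_order[OF 2] hrange(1) hrange(2)] lx x1 gt y1 by auto
      then have "x < z" "z < y" using chain_hless Cx Cy by blast+
      then show False using inc by auto
    next
      case 3
      obtain z where "z \<in> Cy" "z \<in> Cx" "snd (pos y) < snd (pos z)" "snd (pos z) < snd (pos x)"
        using cross[OF Cy(1) Cx(1) order.strict_implies_order[OF 3] hrange(1) hrange(2)] lx x1 gt y1 by auto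
      then have "y < z" "z < x" using chain_hless Cx Cy by blast+
      then show False using inc by auto
    qed
  qed
  then show ?thesis using UNI_R[of y x Cx] inc Cx by blast
qed

lemma SWAP_RL:
  assumes inc: "\<not> x \<le> y" "\<not> y \<le> x" and R: "RIGHTOF pos x y"
  shows "LEFTOF pos y x"
  using PL.SWAP_LR[OF PL_rf inc] R LEFTOF_rf RIGHTOF_rf by blast

lemma left_of_LEFTOF:
  assumes "left_of pos x y" shows "LEFTOF pos x y"
proof -
  from assms obtain C p where H: "\<not> x \<le> y" "\<not> y \<le> x" "max_chain C" "y \<in> C" "p \<in> chain_path pos C"
    "snd p = snd (pos x)" "fst (pos x) < fst p" unfolding left_of_def by blast
  have "xC pos C (snd (pos x)) = fst p" using xC_eq[OF H(3,5)] H(6) by simp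
  then show ?thesis using UNI_L[OF H(1-4)] H(7) by simp
qed

lemma LB_char:
  assumes "x \<in> LBound pos" "max_chain C" shows "\<not> xC pos C (snd (pos x)) < fst (pos x)"
proof
  assume lt: "xC pos C (snd (pos x)) < fst (pos x)"
  have "(xC pos C (snd (pos x)), snd (pos x)) \<in> chain_path pos C" by (rule xC_in'[OF assms(2)])
  then obtain a b where ab: "covers a b" "(xC pos C (snd (pos x)), snd (pos x)) \<in> closed_segment (pos a) (pos b)"
    using chain_path_iff by metis
  define t where "t = fst (pos x) - xC pos C (snd (pos x))"
  have "t > 0" using lt t_def by simp
  moreover have "(fst (pos x) - t, snd (pos x)) \<in> closed_segment (pos a) (pos b)" using ab t_def by simp
  ultimately show False using assms(1) ab(1) unfolding LBound_def by blast
qed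

lemma LB_char2:
  assumes "x \<notin> LBound pos" shows "\<exists>C. max_chain C \<and> xC pos C (snd (pos x)) < fst (pos x)"
proof -
  from assms obtain a b t where H: "covers a b" "t > 0" "(fst (pos x) - t, snd (pos x)) \<in> closed_segment (pos a) (pos b)"
    unfolding LBound_def by blast
  have "a \<le> b" using H(1) unfolding covers_def by auto
  then obtain C where C: "max_chain C" "a \<in> C" "b \<in> C" using chain_of2 by blast
  then have "(fst (pos x) - t, snd (pos x)) \<in> chain_path pos C" using H chain_path_iff by blast
  from xC_eq[OF C(1) this] have "xC pos C (snd (pos x)) = fst (pos x) - t" by simp
  then show ?thesis using C H(2) by auto
qed

end


lemma coatom_inc:
  fixes c c' :: "'a::bounded_lattice"
  assumes "coatom c" "coatom c'" "c \<noteq> c'" shows "\<not> c \<le> c'" "\<not> c' \<le> c"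
  using coatom_ne assms by metis+

context PL begin

lemma BETWEEN:
  assumes co: "coatom c1" "coatom c2" "coatom c3" "c1 \<noteq> c2" "c2 \<noteq> c3" "c1 \<noteq> c3"
    and L: "LEFTOF pos c1 c2" and R: "RIGHTOF pos c3 c2"
    and j: "j \<le> c1" "j \<le> c3" "\<not> j \<le> c2"
  shows False
proof -
  have i12: "\<not> c2 \<le> c1" "\<not> c1 \<le> c2" using coatom_inc co by blast+
  have i23: "\<not> c2 \<le> c3" "\<not> c3 \<le> c2" using coatom_inc co by blast+
  have i13: "\<not> c1 \<le> c3" using coatom_inc co by blast
  have jc1: "j < c1" using j i13 by (metis order.order_iff_strict)
  have jc3: "j < c3" using j i13 by (metis order.order_iff_strict coatom_inc co(1,3,6))
  obtain Ca where Ca: "max_chain Ca" "j \<in> Ca" "c1 \<in> Ca" using chain_of2 j(1) by blast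
  obtain Cb where Cb: "max_chain Cb" "j \<in> Cb" "c3 \<in> Cb" using chain_of2 j(2) by blast
  obtain C2 where C2: "max_chain C2" "c2 \<in> C2" using chain_of by blast
  have "j \<notin> C2"
  proof
    assume "j \<in> C2"
    then have "j \<le> c2 \<or> c2 \<le> j" using max_chain_cmp C2 by blast
    then show False using j i12 by (metis order_trans)
  qed
  then have ne: "xC pos C2 (snd (pos j)) \<noteq> fst (pos j)" using xC_ne C2 by blast
  have ja: "xC pos Ca (snd (pos j)) = fst (pos j)" "xC pos Cb (snd (pos j)) = fst (pos j)"
    using xC_vert Ca Cb by blast+
  have c1a: "xC pos Ca (snd (pos c1)) = fst (pos c1)" using xC_vert Ca by blast
  have c3b: "xC pos Cb (snd (pos c3)) = fst (pos c3)" using xC_vert Cb by blast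
  have L1: "fst (pos c1) < xC pos C2 (snd (pos c1))" using L C2 unfolding LEFTOF_def by blast
  have R3: "xC pos C2 (snd (pos c3)) < fst (pos c3)" using R C2 unfolding RIGHTOF_def by blast
  show False
  proof (cases "xC pos C2 (snd (pos j)) < fst (pos j)")
    case True
    obtain z where z: "z \<in> C2" "z \<in> Ca" "snd (pos j) < snd (pos z)" "snd (pos z) < snd (pos c1)"
      using cross[OF C2(1) Ca(1) order.strict_implies_order[OF hless[OF jc1]] hrange(1) hrange(2)] True ja c1a L1 by auto
    have "j < z" "z < c1" using chain_hless z Ca by blast+
    have "z \<le> c2 \<or> c2 \<le> z" using max_chain_cmp C2 z(1) by blast
    then show False using \<open>j < z\<close> \<open>z < c1\<close> i12 j(3) by (meson order.strict_implies_order order_trans)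
  next
    case False
    then have gt: "fst (pos j) < xC pos C2 (snd (pos j))" using ne by auto
    obtain z where z: "z \<in> Cb" "z \<in> C2" "snd (pos j) < snd (pos z)" "snd (pos z) < snd (pos c3)"
      using cross[OF Cb(1) C2(1) order.strict_implies_order[OF hless[OF jc3]] hrange(1) hrange(2)] gt ja c3b R3 by auto
    have "j < z" "z < c3" using chain_hless z Cb by blast+
    have "z \<le> c2 \<or> c2 \<le> z" using max_chain_cmp C2 z(2) by blast
    then show False using \<open>j < z\<close> \<open>z < c3\<close> i23 j(3) by (meson order.strict_implies_order order_trans)
  qed
qed

lemma G1:
  assumes co: "coatom cl" "coatom cr" "cl \<noteq> cr" and L: "LEFTOF pos cl cr"
    and c: "coatom c"
  shows "c = cl \<or> c = cr"
proof (rule ccontr)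
  assume "\<not> (c = cl \<or> c = cr)"
  then have d: "c \<noteq> cl" "c \<noteq> cr" by auto
  obtain mc where mc: "mc \<in> Jirr" "\<not> mc \<le> c" using coatom_exists_J[OF c] by blast
  obtain ml where ml: "ml \<in> Jirr" "\<not> ml \<le> cl" using coatom_exists_J[OF co(1)] by blast
  obtain mr where mr: "mr \<in> Jirr" "\<not> mr \<le> cr" using coatom_exists_J[OF co(2)] by blast
  have mcl: "mc \<le> cl" "mc \<le> cr" using J_other_coatom[OF c] co d mc by metis+
  have mll: "ml \<le> c" "ml \<le> cr" using J_other_coatom[OF co(1) c d(1)[symmetric] ml] J_other_coatom[OF co(1) co(2) co(3) ml] by auto
  have mrl: "mr \<le> c" "mr \<le> cl" using J_other_coatom[OF co(2) c d(2)[symmetric] mr] J_other_coatom[OF co(2) co(1) co(3)[symmetric] mr] by auto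
  have inc: "\<not> c \<le> cl" "\<not> cl \<le> c" "\<not> c \<le> cr" "\<not> cr \<le> c" "\<not> cl \<le> cr" "\<not> cr \<le> cl"
    using coatom_inc co c d by metis+
  have Rcrcl: "RIGHTOF pos cr cl" using SWAP_LR[OF inc(5,6) L] .
  show False
  proof (cases "LEFTOF pos c cl")
    case True
    show False by (rule BETWEEN[OF c co(1,2) d(1) co(3) d(2) True Rcrcl mll(1,2) ml(2)])
  next
    case False
    then have "RIGHTOF pos c cl" using DICH inc by blast
    then have Lclc: "LEFTOF pos cl c" using SWAP_RL inc by blast
    show False
    proof (cases "RIGHTOF pos c cr")
      case True
      show False by (rule BETWEEN[OF co(1,2) c co(3) d(2)[symmetric] d(1)[symmetric] L True mrl(2,1) mr(2)])
    next
      case False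
      then have "LEFTOF pos c cr" using DICH inc by blast
      then have "RIGHTOF pos cr c" using SWAP_LR inc by blast
      show False by (rule BETWEEN[OF co(1) c co(2) d(1)[symmetric] d(2) co(3) Lclc \<open>RIGHTOF pos cr c\<close> mcl(1,2) mc(2)])
    qed
  qed
qed

lemma G2:
  assumes "x \<in> LBound pos" "y \<in> LBound pos" "\<not> x \<le> y" "\<not> y \<le> x" shows False
proof -
  obtain Cy where Cy: "max_chain Cy" "y \<in> Cy" using chain_of by blast
  obtain Cx where Cx: "max_chain Cx" "x \<in> Cx" using chain_of by blast
  have "xC pos Cy (snd (pos x)) \<noteq> fst (pos x)" using xC_ne Cy notin_incomp assms by blast
  then have "fst (pos x) < xC pos Cy (snd (pos x))" using LB_char[OF assms(1) Cy(1)] by linarith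
  then have Lxy: "LEFTOF pos x y" using UNI_L assms Cy by blast
  have "xC pos Cx (snd (pos y)) \<noteq> fst (pos y)" using xC_ne Cx notin_incomp assms by blast
  then have "fst (pos y) < xC pos Cx (snd (pos y))" using LB_char[OF assms(2) Cx(1)] by linarith
  then have Lyx: "LEFTOF pos y x" using UNI_L assms Cx by blast
  have "RIGHTOF pos y x" using SWAP_LR assms Lxy by blast
  then show False using LR_excl Lyx by blast
qed

end


context PL begin

lemma K1:
  assumes co: "coatom cl" "coatom cr" "cl \<noteq> cr" and L: "LEFTOF pos cl cr"
    and m2: "\<not> m2 \<le> cr" "m2 \<le> cl"
    and C: "max_chain C" "cr \<in> C" and lt: "xC pos C (snd (pos m2)) < fst (pos m2)"
  shows False
proof -
  have inc: "\<not> cl \<le> cr" "\<not> cr \<le> cl" using coatom_inc co by metis+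
  obtain C1 where C1: "max_chain C1" "m2 \<in> C1" "cl \<in> C1" using chain_of2 m2(2) by blast
  have a: "xC pos C1 (snd (pos m2)) = fst (pos m2)" "xC pos C1 (snd (pos cl)) = fst (pos cl)"
    using xC_vert C1 by blast+
  have b: "fst (pos cl) < xC pos C (snd (pos cl))" using L C unfolding LEFTOF_def by blast
  show False
  proof (cases "m2 = cl")
    case True then show False using lt b by simp
  next
    case False
    then have "m2 < cl" using m2 by auto
    obtain z where z: "z \<in> C" "z \<in> C1" "snd (pos m2) < snd (pos z)" "snd (pos z) < snd (pos cl)"
      using cross[OF C(1) C1(1) order.strict_implies_order[OF hless[OF \<open>m2 < cl\<close>]] hrange(1) hrange(2)] lt a b by auto
    have "m2 < z" "z < cl" using chain_hless z C1 by blast+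
    have "z \<le> cr \<or> cr \<le> z" using max_chain_cmp C z(1) by blast
    moreover have "\<not> cr \<le> z"
    proof
      assume "cr \<le> z" then have "cr \<le> cl" using \<open>z < cl\<close> by simp
      then show False using inc by simp
    qed
    ultimately have "z \<le> cr" by simp
    then have "m2 \<le> cr" using \<open>m2 < z\<close> by simp
    then show False using m2(1) by simp
  qed
qed

lemma G3:
  assumes co: "coatom cl" "coatom cr" "cl \<noteq> cr" and L: "LEFTOF pos cl cr"
    and m2: "m2 \<in> Jirr" "\<not> m2 \<le> cr"
  shows "m2 \<in> LBound pos"
proof (rule ccontr)
  assume "m2 \<notin> LBound pos"
  then obtain C where C: "max_chain C" and lt: "xC pos C (snd (pos m2)) < fst (pos m2)"
    using LB_char2 by blast
  have m2cl: "m2 \<le> cl" using J_other_coatom[OF co(2) co(1) co(3)[symmetric] m2] .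
  have allco: "\<And>c. coatom c \<Longrightarrow> c = cl \<or> c = cr" using G1[OF co L] by blast
  have dich: "\<And>x. m2 \<le> x \<or> x \<le> cr" using J_dich[OF m2(1) co(2) m2(2)] by blast
  have m2C: "m2 \<notin> C"
  proof
    assume "m2 \<in> C" then have "xC pos C (snd (pos m2)) = fst (pos m2)" by (rule xC_vert[OF C])
    then show False using lt by simp
  qed
  have ch: "is_chain C" using C unfolding max_chain_def by blast
  have cha: "is_chain {x\<in>C. x \<le> cr}" by (rule chain_subset[OF ch]) auto
  have nea: "{x\<in>C. x \<le> cr} \<noteq> {}" using max_chain_bot[OF C] by auto
  from max_in_finite_chain[OF cha nea] obtain a0 where a0': "a0 \<in> {x\<in>C. x \<le> cr}" "\<forall>x\<in>{x\<in>C. x \<le> cr}. x \<le> a0"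
    by (elim bexE)
  have a0: "a0 \<in> C" "a0 \<le> cr" "\<forall>x\<in>C. x \<le> cr \<longrightarrow> x \<le> a0" using a0' by simp_all
  have chb: "is_chain {x\<in>C. m2 \<le> x}" by (rule chain_subset[OF ch]) auto
  have neb: "{x\<in>C. m2 \<le> x} \<noteq> {}" using max_chain_top[OF C] by auto
  from min_in_finite_chain[OF chb neb] obtain b0 where b0': "b0 \<in> {x\<in>C. m2 \<le> x}" "\<forall>x\<in>{x\<in>C. m2 \<le> x}. b0 \<le> x"
    by (elim bexE)
  have b0: "b0 \<in> C" "m2 \<le> b0" "\<forall>x\<in>C. m2 \<le> x \<longrightarrow> b0 \<le> x" using b0' by simp_all
  have "m2 \<noteq> b0" using b0(1) m2C by blast
  then have m2b0: "m2 < b0" using b0(2) by simp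
  have "a0 < b0"
  proof -
    have "a0 \<le> b0 \<or> b0 \<le> a0" using max_chain_cmp[OF C a0(1) b0(1)] .
    moreover have "\<not> b0 \<le> a0" using b0(2) a0(2) m2(2) by (meson order_trans)
    ultimately show ?thesis by (auto simp: order.order_iff_strict)
  qed
  have nob: "\<not> (\<exists>c\<in>C. a0 < c \<and> c < b0)"
  proof
    assume "\<exists>c\<in>C. a0 < c \<and> c < b0"
    then obtain c where c: "c \<in> C" "a0 < c" "c < b0" by blast
    show False using dich[of c]
    proof
      assume "m2 \<le> c" then show False using b0(3) c by (meson leD)
    next
      assume "c \<le> cr" then show False using a0(3) c by (meson leD)
    qed
  qed
  have cov: "covers a0 b0" by (rule max_chain_consec[OF C a0(1) b0(1) \<open>a0 < b0\<close> nob])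
  have hb0: "snd (pos m2) < snd (pos b0)" using hless[OF m2b0] .
  have above: "\<And>z. z \<in> C \<Longrightarrow> a0 < z \<Longrightarrow> b0 \<le> z"
  proof -
    fix z assume "z \<in> C" "a0 < z"
    then have "\<not> z \<le> cr" using a0(3) by (meson leD)
    then have "m2 \<le> z" using dich by blast
    then show "b0 \<le> z" using b0(3) \<open>z \<in> C\<close> by blast
  qed
  show False
  proof (cases "b0 = top")
    case True
    then have "coatom a0" using cov unfolding coatom_def by simp
    then have "cr = a0" using coatom_above[of a0 cr] a0(2) coatom_less[OF co(2)] by auto
    then show False using K1[OF co L m2(2) m2cl C _ lt] a0(1) by simp
  next
    case bt: False
    obtain C4 where C4: "max_chain C4" "{x\<in>C. x \<le> a0} \<union> {cr} \<subseteq> C4"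
    proof -
      have "is_chain ({x\<in>C. x \<le> a0} \<union> {cr})"
        using ch a0(2) unfolding is_chain_def by (auto intro: order_trans)
      then show ?thesis using that extend_chain by blast
    qed
    have a0C4: "a0 \<in> C4" "cr \<in> C4" using C4 a0(1) by auto
    show False
    proof (cases "snd (pos m2) \<le> snd (pos a0)")
      case True
      have "xC pos C (snd (pos m2)) = xC pos C4 (snd (pos m2))"
        by (rule agree[OF C C4(1) a0(1)]) (use C4 True hrange in auto)
      then show False using K1[OF co L m2(2) m2cl C4(1) a0C4(2)] lt by simp
    next
      case False
      then have ha0: "snd (pos a0) < snd (pos m2)" by simp
      have "\<exists>x\<in>C. x < top" using max_chain_bot[OF C] bot_lt_top by blast
      then obtain c where c: "c \<in> C" "covers c top" using max_chain_pred[OF C max_chain_top[OF C]] by blast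
      have "b0 \<le> c"
      proof (rule ccontr)
        assume "\<not> b0 \<le> c"
        then have "c < b0" using max_chain_cmp[OF C c(1) b0(1)] by auto
        moreover have "b0 < top" using bt top.not_eq_extremum by blast
        ultimately show False using c(2) unfolding covers_def by blast
      qed
      then have "c \<noteq> cr" using b0(2) m2(2) by (metis order_trans)
      then have "c = cl" using allco c(2) unfolding coatom_def by blast
      then have clC: "cl \<in> C" and b0cl: "b0 \<le> cl" using c \<open>b0 \<le> c\<close> by auto
      obtain C1 where C1: "max_chain C1" "{m2} \<union> {x\<in>C. b0 \<le> x} \<subseteq> C1"
      proof -
        have "is_chain ({m2} \<union> {x\<in>C. b0 \<le> x})"
          using ch b0(2) unfolding is_chain_def by (auto intro: order_trans)
        then show ?thesis using that extend_chain by blast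
      qed
      have b0C1: "b0 \<in> C1" "m2 \<in> C1" using C1 b0(1) by auto
      have ii: "fst (pos b0) < xC pos C4 (snd (pos b0))"
      proof -
        have "b0 \<notin> C4"
        proof
          assume "b0 \<in> C4"
          then have "b0 \<le> cr \<or> cr \<le> b0" using max_chain_cmp[OF C4(1) _ a0C4(2)] by blast
          then show False
          proof
            assume "b0 \<le> cr" then show False using b0(2) m2(2) by (meson order_trans)
          next
            assume "cr \<le> b0" then have "b0 = cr \<or> b0 = top" using coatom_above[OF co(2)] by blast
            then show False using bt b0(2) m2(2) by auto
          qed
        qed
        then have ne: "xC pos C4 (snd (pos b0)) \<noteq> fst (pos b0)" using xC_ne C4 by blast
        have Lcl: "fst (pos cl) < xC pos C4 (snd (pos cl))" using L C4 a0C4 unfolding LEFTOF_def by blast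
        show ?thesis
        proof (rule ccontr)
          assume "\<not> fst (pos b0) < xC pos C4 (snd (pos b0))"
          then have lt4: "xC pos C4 (snd (pos b0)) < fst (pos b0)" using ne by auto
          show False
          proof (cases "b0 = cl")
            case True then show False using lt4 Lcl by simp
          next
            case False
            then have "b0 < cl" using b0cl by auto
            obtain z where z: "z \<in> C4" "z \<in> C" "snd (pos b0) < snd (pos z)" "snd (pos z) < snd (pos cl)"
              using cross[OF C4(1) C order.strict_implies_order[OF hless[OF \<open>b0 < cl\<close>]] hrange(1) hrange(2)]
                lt4 Lcl xC_vert[OF C b0(1)] xC_vert[OF C clC] by auto
            have "b0 < z" "z < cl" using chain_hless z C b0(1) clC by blast+
            have "z \<le> cr \<or> cr \<le> z" using max_chain_cmp[OF C4(1) z(1) a0C4(2)] .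
            then show False
            proof
              assume "z \<le> cr" then have "b0 \<le> cr" using \<open>b0 < z\<close> by simp
              then show False using b0(2) m2(2) order_trans by blast
            next
              assume "cr \<le> z" then have "z = cr \<or> z = top" using coatom_above[OF co(2)] by blast
              then show False
              proof
                assume "z = cr" then show False using \<open>b0 < z\<close> b0(2) m2(2) by simp
              next
                assume "z = top" then show False using \<open>z < cl\<close> by simp
              qed
            qed
          qed
        qed
      qed
      have iii: "fst (pos a0) < xC pos C1 (snd (pos a0))"
      proof -
        have "a0 \<notin> C1"
        proof
          assume "a0 \<in> C1"
          then have "a0 \<le> m2 \<or> m2 \<le> a0" using max_chain_cmp[OF C1(1) _ b0C1(2)] by blast
          then show False
          proof
            assume "a0 \<le> m2"
            then have "a0 < m2" using m2(2) a0(2) by auto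
            then show False using cov m2b0 unfolding covers_def by blast
          next
            assume "m2 \<le> a0" then show False using a0(2) m2(2) by (meson order_trans)
          qed
        qed
        then have ne: "xC pos C1 (snd (pos a0)) \<noteq> fst (pos a0)" using xC_ne C1 by blast
        show ?thesis
        proof (rule ccontr)
          assume "\<not> fst (pos a0) < xC pos C1 (snd (pos a0))"
          then have lt1: "xC pos C1 (snd (pos a0)) < fst (pos a0)" using ne by auto
          obtain z where z: "z \<in> C1" "z \<in> C" "snd (pos a0) < snd (pos z)" "snd (pos z) < snd (pos m2)"
            using cross[OF C1(1) C order.strict_implies_order[OF ha0] hrange(1) hrange(2)]
              lt1 lt xC_vert[OF C a0(1)] xC_vert[OF C1(1) b0C1(2)] by auto
          have "a0 < z" using chain_hless C a0(1) z by blast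
          then have "b0 \<le> z" using above z(2) by blast
          then show False using hle[of b0 z] hb0 z(4) by auto
        qed
      qed
      have hab: "snd (pos a0) < snd (pos b0)" using hless \<open>a0 < b0\<close> by blast
      obtain z where z: "z \<in> C4" "z \<in> C1" "snd (pos a0) < snd (pos z)" "snd (pos z) < snd (pos b0)"
        using cross[OF C4(1) C1(1) order.strict_implies_order[OF hab] hrange(1) hrange(2)]
          ii iii xC_vert[OF C4(1) a0C4(1)] xC_vert[OF C1(1) b0C1(1)] by auto
      have "z \<noteq> top" using z(4) hrange(2)[of b0] by auto
      have "z \<le> cr"
      proof -
        have "z \<le> cr \<or> cr \<le> z" using max_chain_cmp[OF C4(1) z(1) a0C4(2)] .
        then show ?thesis using coatom_above[OF co(2), of z] \<open>z \<noteq> top\<close> by auto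
      qed
      have "z \<le> m2 \<or> m2 \<le> z" using max_chain_cmp[OF C1(1) z(2) b0C1(2)] .
      moreover have "\<not> m2 \<le> z" using \<open>z \<le> cr\<close> m2(2) order_trans by blast
      ultimately have "z \<le> m2" by simp
      moreover have "z \<noteq> m2" using \<open>z \<le> cr\<close> m2(2) by blast
      ultimately have "z < m2" by simp
      then have "z < b0" using m2b0 by simp
      have "a0 < z" using chain_hless C4(1) a0C4(1) z(1) z(3) by blast
      then show False using \<open>z < b0\<close> cov unfolding covers_def by blast
    qed
  qed
qed

end


lemma maxJ:
  fixes cl cr m1 m2 j :: "'a::{finite,distrib_lattice,bounded_lattice}"
  assumes allco: "\<And>c. coatom c \<Longrightarrow> c = cl \<or> c = cr" and co: "coatom cl" "coatom cr"
    and m1: "m1 \<in> Jirr" "\<not> m1 \<le> cl" and m2: "m2 \<in> Jirr" "\<not> m2 \<le> cr"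
    and j: "j \<in> Jirr" and maxj: "\<forall>y\<in>Jirr. j \<le> y \<longrightarrow> j = y"
  shows "j = m1 \<or> j = m2"
proof (cases "j \<le> cl \<and> j \<le> cr")
  case False
  then show ?thesis using J_unique[OF co(1) j m1(1) _ m1(2)] J_unique[OF co(2) j m2(1) _ m2(2)] by blast
next
  case True
  have jbot: "j \<noteq> bot" using j unfolding Jirr_def by blast
  have fin: "finite {x. \<not> j \<le> x}" by (rule finite)
  have ne: "{x. \<not> j \<le> x} \<noteq> {}" using jbot by (metis bot.extremum_uniqueI empty_Collect_eq)
  from finite_has_maximal[OF fin ne] obtain x where x: "x \<in> {x. \<not> j \<le> x}"
    "\<forall>b\<in>{x. \<not> j \<le> x}. x \<le> b \<longrightarrow> x = b" by (elim bexE)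
  have xj: "\<not> j \<le> x" using x(1) by simp
  have xmax: "\<And>b. \<not> j \<le> b \<Longrightarrow> x \<le> b \<Longrightarrow> x = b" using x(2) by simp
  have "coatom x" unfolding coatom_def covers_def
  proof (intro conjI notI)
    show "x < top" using xj top.not_eq_extremum by fastforce
    assume "\<exists>z. x < z \<and> z < top"
    then obtain y where y: "x < y" "y < top" by blast
    have jy: "j \<le> y" using xmax[of y] y(1) by fastforce
    have "\<not> top \<le> y" using y(2) by auto
    then obtain i where i: "i \<in> Jirr" "\<not> i \<le> y" using J_below[of top y] by auto
    show False
    proof (cases "j \<le> sup x i")
      case True
      then have "j \<le> x \<or> j \<le> i" using J_sup[OF j] by blast
      then have "j = i" using xj maxj i(1) by blast
      then show False using jy i(2) by simp
    next
      case False
      then have "x = sup x i" using xmax[of "sup x i"] by simp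
      then have "i \<le> x" by (metis sup.cobounded2)
      then show False using i(2) y(1) by simp
    qed
  qed
  then show ?thesis using allco True xj by blast
qed

lemma belowJ:
  fixes cl cr m1 m2 j :: "'a::{finite,distrib_lattice,bounded_lattice}"
  assumes allco: "\<And>c. coatom c \<Longrightarrow> c = cl \<or> c = cr" and co: "coatom cl" "coatom cr"
    and m1: "m1 \<in> Jirr" "\<not> m1 \<le> cl" and m2: "m2 \<in> Jirr" "\<not> m2 \<le> cr"
    and j: "j \<in> Jirr"
  shows "j \<le> m1 \<or> j \<le> m2"
proof -
  from finite_has_maximal2[OF finite[of Jirr] j] obtain m where m: "m \<in> Jirr" "j \<le> m" "\<forall>b\<in>Jirr. m \<le> b \<longrightarrow> m = b"
    by (elim bexE) auto
  then have "m = m1 \<or> m = m2" using maxJ[OF allco co m1 m2] by blast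
  then show ?thesis using m(2) by auto
qed

context PL begin

lemma ljsp_main:
  assumes co: "coatom cl" "coatom cr" "cl \<noteq> cr" and L: "LEFTOF pos cl cr"
    and m1: "m1 \<in> Jirr" "\<not> m1 \<le> cl" and m2: "m2 \<in> Jirr" "\<not> m2 \<le> cr"
  shows "ljsp pos cl = m2"
  unfolding ljsp_def
proof (rule Greatest_equality)
  have m2cl: "m2 \<le> cl" using J_other_coatom[OF co(2) co(1) co(3)[symmetric] m2] .
  have m1cr: "m1 \<le> cr" using J_other_coatom[OF co(1) co(2) co(3) m1] .
  have LB: "m2 \<in> LBound pos" using G3[OF co L m2] .
  show "m2 \<in> LBound pos \<inter> Jirr0 \<inter> {z. z \<le> cl}" using LB m2cl m2(1) unfolding Jirr0_def by simp
  have allco: "\<And>c. coatom c \<Longrightarrow> c = cl \<or> c = cr" using G1[OF co L] by blast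
  fix y assume y: "y \<in> LBound pos \<inter> Jirr0 \<inter> {z. z \<le> cl}"
  show "y \<le> m2"
  proof (cases "y = bot")
    case True then show ?thesis by simp
  next
    case False
    then have yJ: "y \<in> Jirr" "y \<in> LBound pos" using y unfolding Jirr0_def by auto
    have "y \<le> m1 \<or> y \<le> m2" using belowJ[OF allco co(1,2) m1 m2 yJ(1)] .
    then show ?thesis
    proof
      assume "y \<le> m1"
      show ?thesis
      proof (rule ccontr)
        assume "\<not> y \<le> m2"
        moreover have "\<not> m2 \<le> y"
        proof
          assume "m2 \<le> y" then have "m2 \<le> cr" using \<open>y \<le> m1\<close> m1cr by simp
          then show False using m2 by simp
        qed
        ultimately show False using G2[OF yJ(2) LB] by blast
      qed
    qed
  qed
qed

end

theorem lemma2p2: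
  fixes pos :: "'a::{finite, distrib_lattice, bounded_lattice} \<Rightarrow> real \<times> real"
    and cl cr e :: 'a
  assumes "planar_diagram pos"
    and "coatom cl" and "coatom cr" and "cl \<notin> Jirr" and "cr \<notin> Jirr"
    and "cl \<noteq> cr" and "left_of pos cl cr"
    and "e = inf cl cr"
  shows "Jirr - {y. y \<le> e} = {ljsp pos cl, rjsp pos cr} \<and> ljsp pos cl \<noteq> rjsp pos cr
    \<and> {x \<in> Jirr. \<forall>y \<in> Jirr. x \<le> y \<longrightarrow> x = y} = {ljsp pos cl, rjsp pos cr}
    \<and> \<not> ljsp pos cl \<le> rjsp pos cr \<and> \<not> rjsp pos cr \<le> ljsp pos cl
    \<and> \<not> ljsp pos cl \<le> sup e (rjsp pos cr) \<and> \<not> rjsp pos cr \<le> sup e (ljsp pos cl)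
    \<and> \<not> e \<le> ljsp pos cl \<and> \<not> e \<le> rjsp pos cr"
proof -
  note co = assms(2,3,6)
  have nt: "(bot::'a) \<noteq> top" using coatom_less[OF assms(2)] by (metis bot.extremum_strict)
  interpret P: PL pos using assms(1) nt by unfold_locales
  have L: "LEFTOF pos cl cr" using P.left_of_LEFTOF assms(7) by blast
  obtain m1 where m1: "m1 \<in> Jirr" "\<not> m1 \<le> cl" using coatom_exists_J[OF assms(2)] by blast
  obtain m2 where m2: "m2 \<in> Jirr" "\<not> m2 \<le> cr" using coatom_exists_J[OF assms(3)] by blast
  have allco: "\<And>c. coatom c \<Longrightarrow> c = cl \<or> c = cr" using P.G1[OF co L] by blast
  have m2cl: "m2 \<le> cl" using J_other_coatom[OF co(2) co(1) co(3)[symmetric] m2] .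
  have m1cr: "m1 \<le> cr" using J_other_coatom[OF co(1) co(2) co(3) m1] .
  have lj: "ljsp pos cl = m2" using P.ljsp_main[OF co L m1 m2] .
  have inc: "\<not> cl \<le> cr" "\<not> cr \<le> cl" using coatom_inc co by metis+
  have "RIGHTOF pos cr cl" using P.SWAP_LR[OF inc L] .
  then have "LEFTOF (\<lambda>x. rf (pos x)) cr cl" using P.LEFTOF_rf by simp
  then have "ljsp (\<lambda>x. rf (pos x)) cr = m1"
    using PL.ljsp_main[OF P.PL_rf co(2) co(1) co(3)[symmetric] _ m2 m1] by blast
  then have rj: "rjsp pos cr = m1" using ljsp_rf by metis
  have e: "e = inf cl cr" by (rule assms(8))
  have A: "Jirr - {y. y \<le> e} = {m2, m1}"
  proof (rule set_eqI)
    fix j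
    show "j \<in> Jirr - {y. y \<le> e} \<longleftrightarrow> j \<in> {m2, m1}"
    proof
      assume "j \<in> Jirr - {y. y \<le> e}"
      then have "j \<in> Jirr" "\<not> j \<le> cl \<or> \<not> j \<le> cr" using e by auto
      then show "j \<in> {m2, m1}" using J_unique[OF co(1) _ m1(1) _ m1(2)] J_unique[OF co(2) _ m2(1) _ m2(2)] by blast
    next
      assume "j \<in> {m2, m1}"
      then show "j \<in> Jirr - {y. y \<le> e}" using m1 m2 e by auto
    qed
  qed
  have B: "m2 \<noteq> m1" using m2cl m1 by auto
  have C: "{x \<in> Jirr. \<forall>y \<in> Jirr. x \<le> y \<longrightarrow> x = y} = {m2, m1}"
  proof (rule set_eqI)
    fix j
    show "j \<in> {x \<in> Jirr. \<forall>y \<in> Jirr. x \<le> y \<longrightarrow> x = y} \<longleftrightarrow> j \<in> {m2, m1}"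
    proof
      assume "j \<in> {x \<in> Jirr. \<forall>y \<in> Jirr. x \<le> y \<longrightarrow> x = y}"
      then show "j \<in> {m2, m1}" using maxJ[OF allco co(1,2) m1 m2] by blast
    next
      assume "j \<in> {m2, m1}"
      then show "j \<in> {x \<in> Jirr. \<forall>y \<in> Jirr. x \<le> y \<longrightarrow> x = y}"
      proof
        assume j: "j = m2"
        have "\<forall>y\<in>Jirr. m2 \<le> y \<longrightarrow> m2 = y"
        proof (intro ballI impI)
          fix y assume "y \<in> Jirr" "m2 \<le> y"
          then have "\<not> y \<le> cr" using m2(2) order_trans by blast
          then show "m2 = y" using J_unique[OF co(2) m2(1) \<open>y \<in> Jirr\<close> m2(2)] by blast
        qed
        then show ?thesis using j m2(1) by simp
      next
        assume "j \<in> {m1}"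
        then have j: "j = m1" by simp
        have "\<forall>y\<in>Jirr. m1 \<le> y \<longrightarrow> m1 = y"
        proof (intro ballI impI)
          fix y assume "y \<in> Jirr" "m1 \<le> y"
          then have "\<not> y \<le> cl" using m1(2) order_trans by blast
          then show "m1 = y" using J_unique[OF co(1) m1(1) \<open>y \<in> Jirr\<close> m1(2)] by blast
        qed
        then show ?thesis using j m1(1) by simp
      qed
    qed
  qed
  have D: "\<not> m2 \<le> m1" "\<not> m1 \<le> m2" using m1cr m2cl m1(2) m2(2) order_trans by blast+
  have E1: "\<not> m2 \<le> sup e m1"
  proof
    assume "m2 \<le> sup e m1"
    moreover have "sup e m1 \<le> cr" using e m1cr by simp
    ultimately show False using m2(2) order_trans by blast
  qed
  have E2: "\<not> m1 \<le> sup e m2"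
  proof
    assume "m1 \<le> sup e m2"
    moreover have "sup e m2 \<le> cl" using e m2cl by simp
    ultimately show False using m1(2) order_trans by blast
  qed
  have F1: "\<not> e \<le> m2"
  proof
    assume em: "e \<le> m2"
    have "cl \<le> m2"
    proof (rule ccontr)
      assume "\<not> cl \<le> m2"
      then obtain j where j: "j \<in> Jirr" "j \<le> cl" "\<not> j \<le> m2" using J_below by blast
      have "j \<le> cr"
      proof (rule ccontr)
        assume "\<not> j \<le> cr" then have "j = m2" using J_unique[OF co(2) j(1) m2(1) _ m2(2)] by blast
        then show False using j(3) by simp
      qed
      then have "j \<le> e" using e j(2) by simp
      then show False using em j(3) by simp
    qed
    then have "cl = m2" using m2cl by simp
    then show False using assms(4) m2(1) by simp
  qed
  have F2: "\<not> e \<le> m1"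
  proof
    assume em: "e \<le> m1"
    have "cr \<le> m1"
    proof (rule ccontr)
      assume "\<not> cr \<le> m1"
      then obtain j where j: "j \<in> Jirr" "j \<le> cr" "\<not> j \<le> m1" using J_below by blast
      have "j \<le> cl"
      proof (rule ccontr)
        assume "\<not> j \<le> cl" then have "j = m1" using J_unique[OF co(1) j(1) m1(1) _ m1(2)] by blast
        then show False using j(3) by simp
      qed
      then have "j \<le> e" using e j(2) by simp
      then show False using em j(3) by simp
    qed
    then have "cr = m1" using m1cr by simp
    then show False using assms(5) m1(1) by simp
  qed
  show ?thesis unfolding lj rj using A B C D E1 E2 F1 F2 by blast
qed


end
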